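(* Let $G$ be a finite Dedekind group. Then $G$ is code-perfect if and only if every subgroup of $G$ is code-perfect.
   Context: A Dedekind group is a group all of whose subgroups are normal (every subgroup of a Dedekind group is again a Dedekind group). For a normal subgroup $H$ of a finite group $G$ with identity $e$, the subgroup sum graph $\Gamma_{G,H}$ is the simple undirected graph with vertex set $G$ in which distinct vertices $x,y$ are adjacent if and only if $xy\in H\setminus\{e\}$. A perfect code in a graph is a set $C$ of vertices that is independent and such that every vertex not in $C$ is adjacent to exactly one vertex of $C$. A finite group $G$ is code-perfect if $\Gamma_{G,H}$ admits a perfect code for every normal subgroup $H$ of $G$. *)

theory Defs
  imports "HOL-Algebra.Algebra"
begin

definition dedekind_group :: "('a, 'b) monoid_scheme \<Rightarrow> bool" where
  "dedekind_group G \<longleftrightarrow> group G \<and> (\<forall>H. subgroup H G \<longrightarrow> H \<lhd> G)"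

definition sum_graph_adj :: "('a, 'b) monoid_scheme \<Rightarrow> 'a set \<Rightarrow> 'a \<Rightarrow> 'a \<Rightarrow> bool" where
  "sum_graph_adj G H x y \<longleftrightarrow>
     x \<in> carrier G \<and> y \<in> carrier G \<and> x \<noteq> y \<and> x \<otimes>\<^bsub>G\<^esub> y \<in> H - {\<one>\<^bsub>G\<^esub>}"

definition perfect_code :: "'v set \<Rightarrow> ('v \<Rightarrow> 'v \<Rightarrow> bool) \<Rightarrow> 'v set \<Rightarrow> bool" where
  "perfect_code V E C \<longleftrightarrow> C \<subseteq> V \<and>
     (\<forall>x\<in>C. \<forall>y\<in>C. \<not> E x y) \<and>
     (\<forall>v\<in>V - C. \<exists>!c. c \<in> C \<and> E v c)"

definition code_perfect :: "('a, 'b) monoid_scheme \<Rightarrow> bool" where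
  "code_perfect G \<longleftrightarrow>
     (\<forall>H. H \<lhd> G \<longrightarrow> (\<exists>C. perfect_code (carrier G) (sum_graph_adj G H) C))"

end

theory Submission
  imports Defs
begin

lemma restrict_code:
  fixes G :: "('a, 'b) monoid_scheme"
  assumes grp: "group G" and K: "subgroup K G" and HK: "H \<subseteq> K"
    and pc: "perfect_code (carrier G) (sum_graph_adj G H) C"
  shows "perfect_code K (sum_graph_adj (G\<lparr>carrier := K\<rparr>) H) (C \<inter> K)"
proof -
  interpret group G by (rule grp)
  have adj: "\<And>x y. sum_graph_adj (G\<lparr>carrier := K\<rparr>) H x y \<longleftrightarrow> x \<in> K \<and> y \<in> K \<and> sum_graph_adj G H x y"
    using subgroup.subset[OF K] unfolding sum_graph_adj_def by auto
  have Kc: "K \<subseteq> carrier G" using subgroup.subset[OF K] .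
  show ?thesis
    unfolding perfect_code_def
  proof (intro conjI ballI)
    show "C \<inter> K \<subseteq> K" by auto
  next
    fix x y assume "x \<in> C \<inter> K" "y \<in> C \<inter> K"
    then show "\<not> sum_graph_adj (G\<lparr>carrier := K\<rparr>) H x y"
      using pc adj unfolding perfect_code_def by auto
  next
    fix v assume v: "v \<in> K - C \<inter> K"
    then have vG: "v \<in> carrier G - C" using Kc by auto
    then obtain c where c: "c \<in> C" "sum_graph_adj G H v c"
      and u: "\<And>c'. c' \<in> C \<and> sum_graph_adj G H v c' \<Longrightarrow> c' = c"
      using pc unfolding perfect_code_def by metis
    have cG: "c \<in> carrier G" and vc: "v \<otimes>\<^bsub>G\<^esub> c \<in> K" using c HK unfolding sum_graph_adj_def by auto
    have vK: "v \<in> K" using v by auto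
    have "c = inv\<^bsub>G\<^esub> v \<otimes>\<^bsub>G\<^esub> (v \<otimes>\<^bsub>G\<^esub> c)" using cG vK Kc by (simp add: m_assoc[symmetric] subsetD)
    also have "\<dots> \<in> K" using vK vc K by (simp add: subgroup.m_closed subgroup.m_inv_closed)
    finally have cK: "c \<in> K" .
    show "\<exists>!c. c \<in> C \<inter> K \<and> sum_graph_adj (G\<lparr>carrier := K\<rparr>) H v c"
      using c cK vK u adj by (metis IntD1 IntI)
  qed
qed

theorem lemma4p4:
  fixes G :: "('a, 'b) monoid_scheme"
  assumes "group G" and "finite (carrier G)" and "dedekind_group G"
  shows "code_perfect G \<longleftrightarrow>
           (\<forall>K. subgroup K G \<longrightarrow> code_perfect (G\<lparr>carrier := K\<rparr>))"
proof
  assume cp: "code_perfect G"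
  show "\<forall>K. subgroup K G \<longrightarrow> code_perfect (G\<lparr>carrier := K\<rparr>)"
  proof (intro allI impI)
    fix K assume K: "subgroup K G"
    show "code_perfect (G\<lparr>carrier := K\<rparr>)"
      unfolding code_perfect_def
    proof (intro allI impI)
      fix H assume "H \<lhd> G\<lparr>carrier := K\<rparr>"
      then have HsK: "subgroup H (G\<lparr>carrier := K\<rparr>)" by (rule normal_imp_subgroup)
      then have HG: "subgroup H G" using group.incl_subgroup[OF assms(1) K] by blast
      have HK: "H \<subseteq> K" using subgroup.subset[OF HsK] by simp
      have "H \<lhd> G" using assms(3) HG unfolding dedekind_group_def by blast
      then obtain C where "perfect_code (carrier G) (sum_graph_adj G H) C"
        using cp unfolding code_perfect_def by blast
      then show "\<exists>C. perfect_code (carrier (G\<lparr>carrier := K\<rparr>)) (sum_graph_adj (G\<lparr>carrier := K\<rparr>) H) C"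
        using restrict_code[OF assms(1) K HK] by auto
    qed
  qed
next
  assume "\<forall>K. subgroup K G \<longrightarrow> code_perfect (G\<lparr>carrier := K\<rparr>)"
  then have "code_perfect (G\<lparr>carrier := carrier G\<rparr>)"
    using group.subgroup_self[OF assms(1)] by blast
  then show "code_perfect G" by simp
qed

end
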